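(* Let $k\ge 2$, $w=2^k-1$, $v=2^{k-1}$. For $j\ge1$ let $\tilde U_j^R$ be the sequence of jump lengths consisting of one jump of length $2^j+2^{j-1}-1$ followed by $2^j-1$ jumps of length $1$. Consider a line of $w$ cells indexed $0,\dots,w-1$, all empty except one cell with even index $p\in\{0,2,\dots,w-1\}$ (arbitrary), on which the frog stands. Then for the fixed sequence $\tilde U_1^R,\tilde U_2^R,\dots,\tilde U_{k-1}^R$ there is a valid execution that visits every cell of the line exactly once and ends with the frog on the center cell $v-1$.
   Context: A frog on a line of cells performs a given sequence of positive jump lengths; for each jump it chooses a direction, moving from position $q$ to $q+J$ or $q-J$. An execution is valid if every landing cell lies on the line, is not blocked, and has not been visited before (the starting cell counts as visited). Cells are indexed from $0$. *)

theory Defs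
  imports Main
begin

fun frog_path :: "int \<Rightarrow> nat list \<Rightarrow> bool list \<Rightarrow> int list" where
  "frog_path q (J # js) (d # ds) = q # frog_path (if d then q + int J else q - int J) js ds"
| "frog_path q _ _ = [q]"

definition valid_execution :: "nat \<Rightarrow> int set \<Rightarrow> int \<Rightarrow> nat list \<Rightarrow> bool list \<Rightarrow> bool" where
  "valid_execution n B q js ds \<longleftrightarrow>
     length ds = length js \<and>
     (\<forall>x \<in> set (tl (frog_path q js ds)). 0 \<le> x \<and> x < int n \<and> x \<notin> B) \<and>
     distinct (frog_path q js ds)"

definition U_R :: "nat \<Rightarrow> nat list" where
  "U_R j = [2^j + 2^(j-1) - 1] @ replicate (2^j - 1) 1"

end

theory Submission
  imports Defs
begin

lemma fp_hd: "frog_path q js ds = q # tl (frog_path q js ds)"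
  by (cases js; cases ds) auto

lemma fp_ne[simp]: "frog_path q js ds \<noteq> []"
  by (cases js; cases ds) auto

lemma fp_append:
  "length ds1 = length js1 \<Longrightarrow> frog_path q (js1@js2) (ds1@ds2) =
     frog_path q js1 ds1 @ tl (frog_path (last (frog_path q js1 ds1)) js2 ds2)"
proof (induction js1 arbitrary: ds1 q)
  case Nil
  then show ?case by (subst fp_hd) simp
next
  case (Cons J js1)
  then obtain d ds1' where d: "ds1 = d # ds1'" "length ds1' = length js1" by (cases ds1) auto
  show ?case using Cons.IH[OF d(2)] d
    by simp
qed

lemma fp_right:
  "set (frog_path q (replicate n 1) (replicate n True)) = {q..q+int n} \<and>
   distinct (frog_path q (replicate n 1) (replicate n True)) \<and>
   last (frog_path q (replicate n 1) (replicate n True)) = q + int n"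
proof (induction n arbitrary: q)
  case 0 then show ?case by simp
next
  case (Suc n)
  have e: "frog_path q (replicate (Suc n) 1) (replicate (Suc n) True)
     = q # frog_path (q+1) (replicate n 1) (replicate n True)" by simp
  have s: "{q..q + int (Suc n)} = insert q {q+1..q+1+int n}" by (auto simp del: frog_path.simps)
  show ?case unfolding e using Suc[of "q+1"] s
    by (simp del: frog_path.simps)
qed

lemma fp_left:
  "set (frog_path q (replicate n 1) (replicate n False)) = {q - int n..q} \<and>
   distinct (frog_path q (replicate n 1) (replicate n False)) \<and>
   last (frog_path q (replicate n 1) (replicate n False)) = q - int n"
proof (induction n arbitrary: q)
  case 0 then show ?case by simp
next
  case (Suc n)
  have e: "frog_path q (replicate (Suc n) 1) (replicate (Suc n) False)
     = q # frog_path (q-1) (replicate n 1) (replicate n False)" by simp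
  have s: "{q - int (Suc n)..q} = insert q {q - 1 - int n..q-1}" by (auto simp del: frog_path.simps)
  show ?case unfolding e using Suc[of "q-1"] s
    by (simp del: frog_path.simps)
qed

definition JS :: "nat \<Rightarrow> nat list" where "JS k = concat (map U_R [1..<k])"

lemma JS_Suc: "1 \<le> k \<Longrightarrow> JS (Suc k) = JS k @ ((2^k + 2^(k-1) - 1) # replicate (2^k - 1) 1)"
  by (simp add: JS_def U_R_def)

lemma main:
  assumes "1 \<le> k"
  shows "\<forall>(a::int) (p::nat). even p \<and> p < 2^k - 1 \<longrightarrow> (\<exists>ds. length ds = length (JS k) \<and>
     distinct (frog_path (a + int p) (JS k) ds) \<and>
     set (frog_path (a + int p) (JS k) ds) = {a..<a + 2^k - 1} \<and>
     last (frog_path (a + int p) (JS k) ds) = a + 2^(k-1) - 1)"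
  using assms
proof (induction k rule: dec_induct)
  case base
  show ?case by (auto simp: JS_def)
next
  case (step k)
  define W :: int where "W = 2^k"
  define V :: int where "V = 2^(k-1)"
  have WV: "W = 2 * V" unfolding W_def V_def using step(1)
    by (cases k) simp_all
  have Vp: "V \<ge> 1" unfolding V_def by simp
  have h1: "(1::nat) \<le> 2^k + 2^(k-1)" using one_le_power[of "2::nat" k] by linarith
  have iJ: "int (2^k + 2^(k-1) - 1) = W + V - 1" unfolding W_def V_def
    using h1 by (simp add: of_nat_diff)
  have iw: "int (2^k - 1) = W - 1" unfolding W_def by (simp add: of_nat_diff)
  have big: "(2::int)^(Suc k) = 2 * W" "(2::int)^(Suc k - 1) = W" unfolding W_def by simp_all
  show ?case
  proof (intro allI impI)
    fix a :: int and p :: nat assume ap: "even p \<and> p < 2 ^ Suc k - 1"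
    have ib: "int (2 ^ Suc k - 1) = 2*W - 1" unfolding W_def by (simp add: of_nat_diff)
    have pw: "int p < 2*W - 1" using ap ib by linarith
    have pne: "int p \<noteq> W - 1"
    proof
      assume "int p = W - 1"
      hence "int p + 1 = 2 * V" using WV by simp
      hence "odd (int p)" by presburger
      thus False using ap by simp
    qed
    show "\<exists>ds. length ds = length (JS (Suc k)) \<and>
         distinct (frog_path (a + int p) (JS (Suc k)) ds) \<and>
         set (frog_path (a + int p) (JS (Suc k)) ds) = {a..<a + 2 ^ Suc k - 1} \<and>
         last (frog_path (a + int p) (JS (Suc k)) ds) = a + 2 ^ (Suc k - 1) - 1"
    proof (cases "int p < W - 1")
      case True
      hence "p < 2^k - 1" using iw by linarith
      with step(3) ap obtain ds1 where d1: "length ds1 = length (JS k)"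
        "distinct (frog_path (a + int p) (JS k) ds1)"
        "set (frog_path (a + int p) (JS k) ds1) = {a..<a + 2^k - 1}"
        "last (frog_path (a + int p) (JS k) ds1) = a + 2^(k-1) - 1" by blast
      have lst: "last (frog_path (a + int p) (JS k) ds1) = a + V - 1" using d1(4) V_def by simp
      have eq: "a + V - 1 + int (2^k + 2^(k-1) - 1) = a + 2*W - 2" using iJ WV by simp
      let ?ds = "ds1 @ (True # replicate (2^k - 1) False)"
      have e: "frog_path (a + int p) (JS (Suc k)) ?ds = frog_path (a + int p) (JS k) ds1 @
          frog_path (a + 2*W - 2) (replicate (2^k - 1) 1) (replicate (2^k - 1) False)"
      proof -
        have "frog_path (a + int p) (JS (Suc k)) ?ds = frog_path (a + int p) (JS k) ds1 @
          frog_path (a + V - 1 + int (2^k + 2^(k-1) - 1)) (replicate (2^k - 1) 1) (replicate (2^k - 1) False)"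
          unfolding JS_Suc[OF step(1)] fp_append[OF d1(1)] lst by simp
        thus ?thesis unfolding eq .
      qed
      have L: "set (frog_path (a + 2*W - 2) (replicate (2^k - 1) 1) (replicate (2^k - 1) False)) = {a+W-1..a+2*W-2}"
        "distinct (frog_path (a + 2*W - 2) (replicate (2^k - 1) 1) (replicate (2^k - 1) False))"
        "last (frog_path (a + 2*W - 2) (replicate (2^k - 1) 1) (replicate (2^k - 1) False)) = a + W - 1"
        using fp_left[of "a + 2*W - 2" "2^k-1"] iw by auto
      have s1: "set (frog_path (a + int p) (JS k) ds1) = {a..<a+W-1}" using d1(3) W_def by simp
      have disj: "{a..<a+W-1} \<inter> {a+W-1..a+2*W-2} = {}" by auto
      have un: "{a..<a+W-1} \<union> {a+W-1..a+2*W-2} = {a..<a+2*W-1}" using Vp WV by auto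
      show ?thesis
      proof (rule exI[of _ ?ds], intro conjI)
        show "length ?ds = length (JS (Suc k))" using d1(1) by (simp add: JS_Suc[OF step(1)])
        show "distinct (frog_path (a + int p) (JS (Suc k)) ?ds)"
          unfolding e using d1(2) L(1,2) s1 disj by simp
        show "set (frog_path (a + int p) (JS (Suc k)) ?ds) = {a..<a + 2 ^ Suc k - 1}"
          unfolding e big using s1 L(1) un by simp
        show "last (frog_path (a + int p) (JS (Suc k)) ?ds) = a + 2 ^ (Suc k - 1) - 1"
          unfolding e big using L(3) by simp
      qed
    next
      case False
      hence pg: "int p \<ge> W" using pne by linarith
      define p' where "p' = p - 2^k"
      have pp: "int p' = int p - W" unfolding p'_def W_def using pg W_def
        by (simp add: of_nat_diff)
      have "p' < 2^k - 1" using pp pw iw by linarith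
      moreover have "even p'" unfolding p'_def using ap step(1)
        by (simp add: p'_def)
      ultimately obtain ds1 where d1: "length ds1 = length (JS k)"
        "distinct (frog_path ((a + W) + int p') (JS k) ds1)"
        "set (frog_path ((a + W) + int p') (JS k) ds1) = {a + W..<a + W + 2^k - 1}"
        "last (frog_path ((a + W) + int p') (JS k) ds1) = a + W + 2^(k-1) - 1"
        using step(3) by blast
      have ap': "a + W + int p' = a + int p" using pp by simp
      have d1': "distinct (frog_path (a + int p) (JS k) ds1)"
        "set (frog_path (a + int p) (JS k) ds1) = {a+W..<a+2*W-1}"
        "last (frog_path (a + int p) (JS k) ds1) = a + W + V - 1"
      proof -
        have x: "a + W + 2^k - 1 = a + 2*W - 1" "a + W + 2^(k-1) - 1 = a + W + V - 1"
          unfolding W_def V_def by simp_all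
        show "distinct (frog_path (a + int p) (JS k) ds1)"
          "set (frog_path (a + int p) (JS k) ds1) = {a+W..<a+2*W-1}"
          "last (frog_path (a + int p) (JS k) ds1) = a + W + V - 1"
          using d1(2,3,4) unfolding ap' x by simp_all
      qed
      have eq: "a + W + V - 1 - int (2^k + 2^(k-1) - 1) = a" using iJ by simp
      let ?ds = "ds1 @ (False # replicate (2^k - 1) True)"
      have e: "frog_path (a + int p) (JS (Suc k)) ?ds = frog_path (a + int p) (JS k) ds1 @
          frog_path a (replicate (2^k - 1) 1) (replicate (2^k - 1) True)"
      proof -
        have "frog_path (a + int p) (JS (Suc k)) ?ds = frog_path (a + int p) (JS k) ds1 @
          frog_path (a + W + V - 1 - int (2^k + 2^(k-1) - 1)) (replicate (2^k - 1) 1) (replicate (2^k - 1) True)"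
          unfolding JS_Suc[OF step(1)] fp_append[OF d1(1)] d1'(3) by simp
        thus ?thesis unfolding eq .
      qed
      have L: "set (frog_path a (replicate (2^k - 1) 1) (replicate (2^k - 1) True)) = {a..a+W-1}"
        "distinct (frog_path a (replicate (2^k - 1) 1) (replicate (2^k - 1) True))"
        "last (frog_path a (replicate (2^k - 1) 1) (replicate (2^k - 1) True)) = a + W - 1"
        using fp_right[of "a" "2^k-1"] iw by auto
      have disj: "{a+W..<a+2*W-1} \<inter> {a..a+W-1} = {}" by auto
      have un: "{a+W..<a+2*W-1} \<union> {a..a+W-1} = {a..<a+2*W-1}" using Vp WV by auto
      show ?thesis
      proof (rule exI[of _ ?ds], intro conjI)
        show "length ?ds = length (JS (Suc k))" using d1(1) by (simp add: JS_Suc[OF step(1)])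
        show "distinct (frog_path (a + int p) (JS (Suc k)) ?ds)"
          unfolding e using d1'(1,2) L(1,2) disj by simp
        show "set (frog_path (a + int p) (JS (Suc k)) ?ds) = {a..<a + 2 ^ Suc k - 1}"
          unfolding e big using d1'(2) L(1) un by simp
        show "last (frog_path (a + int p) (JS (Suc k)) ?ds) = a + 2 ^ (Suc k - 1) - 1"
          unfolding e big using L(3) by simp
      qed
    qed
  qed
qed

theorem mainTheorem8:
  fixes k p :: nat
  assumes "k \<ge> 2" and "even p" and "p < 2^k - 1"
  shows "\<exists>ds. valid_execution (2^k - 1) {} (int p) (concat (map U_R [1..<k])) ds \<and>
              set (frog_path (int p) (concat (map U_R [1..<k])) ds) = {0..<int (2^k - 1)} \<and>
              last (frog_path (int p) (concat (map U_R [1..<k])) ds) = int (2^(k-1)) - 1"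
proof -
  have k1: "1 \<le> k" using assms(1) by simp
  have "\<exists>ds. length ds = length (JS k) \<and>
     distinct (frog_path (0 + int p) (JS k) ds) \<and>
     set (frog_path (0 + int p) (JS k) ds) = {0..<0 + 2^k - 1} \<and>
     last (frog_path (0 + int p) (JS k) ds) = 0 + 2^(k-1) - 1"
    using main[OF k1] assms(2,3) by blast
  then obtain ds where d: "length ds = length (JS k)"
     "distinct (frog_path (int p) (JS k) ds)"
     "set (frog_path (int p) (JS k) ds) = {0..<2^k - 1}"
     "last (frog_path (int p) (JS k) ds) = 2^(k-1) - 1"
    by auto
  have iw: "int (2^k - 1) = 2^k - 1" by (simp add: of_nat_diff)
  have tl: "set (tl xs) \<subseteq> set xs" for xs :: "int list" by (cases xs) auto
  have sub: "\<forall>x \<in> set (tl (frog_path (int p) (JS k) ds)). 0 \<le> x \<and> x < int (2^k - 1) \<and> x \<notin> {}"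
  proof
    fix x assume "x \<in> set (tl (frog_path (int p) (JS k) ds))"
    hence "x \<in> {0..<2^k - 1}" using tl d(3) by blast
    thus "0 \<le> x \<and> x < int (2^k - 1) \<and> x \<notin> {}" unfolding iw by simp
  qed
  show ?thesis
    unfolding JS_def[symmetric] valid_execution_def
    apply (rule exI[of _ ds])
    using d sub iw by simp
qed

end
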